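(* Let $c\in\mathbb{N}$ and let $F$ be a double-fan on at least $8c^2+2c+1$ vertices, with centres $v_1,v_2$. Let $\mathcal{P},\mathcal{Q}$ be partitions of $F$ such that $\mathcal{P}$ is a tree-partition and $|P\cap Q|\leq c$ for all $P\in\mathcal{P}$ and $Q\in\mathcal{Q}$. For a vertex $v_i$, let $P_i$ and $Q_i$ denote the parts of $\mathcal{P}$ and $\mathcal{Q}$ containing $v_i$. If $P_1\neq P_2$ and $Q_1\neq Q_2$, then there exist vertices $v_3,v_4$ of $F$ such that $\{v_1,v_2,v_3,v_4\}$ is a $4$-clique in $F$ and $Q_1,Q_2,Q_3,Q_4$ are pairwise distinct.
   Context: All graphs are finite, simple and undirected. A partition $\mathcal{P}$ of a graph $G$ is a partition of $V(G)$ into parts. The quotient $G/\mathcal{P}$ is the graph whose vertices are the non-empty parts of $\mathcal{P}$, where distinct parts $P_1,P_2$ are adjacent iff some $v_1\in P_1$ and $v_2\in P_2$ satisfy $v_1v_2\in E(G)$. $\mathcal{P}$ is a tree-partition if $G/\mathcal{P}$ is isomorphic to a subgraph of a tree. A vertex is dominant if it is adjacent to every other vertex. A graph $F$ is a double-fan if it has two dominant vertices $v$ and $w$, called the centres, such that $F-v-w$ is a path. *)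

theory Defs
  imports Main "HOL-Library.Disjoint_Sets"
begin

definition graph :: "'a set \<Rightarrow> 'a set set \<Rightarrow> bool" where
  "graph V E \<longleftrightarrow> finite V \<and> (\<forall>e\<in>E. \<exists>u v. e = {u, v} \<and> u \<noteq> v \<and> u \<in> V \<and> v \<in> V)"

definition adj :: "'a set set \<Rightarrow> 'a \<Rightarrow> 'a \<Rightarrow> bool" where
  "adj E u v \<longleftrightarrow> {u, v} \<in> E"

definition dominant :: "'a set \<Rightarrow> 'a set set \<Rightarrow> 'a \<Rightarrow> bool" where
  "dominant V E v \<longleftrightarrow> v \<in> V \<and> (\<forall>u\<in>V. u \<noteq> v \<longrightarrow> adj E v u)"

definition induced_edges :: "'a set set \<Rightarrow> 'a set \<Rightarrow> 'a set set" where
  "induced_edges E S = {e \<in> E. e \<subseteq> S}"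

definition is_path_graph :: "'a set \<Rightarrow> 'a set set \<Rightarrow> bool" where
  "is_path_graph V E \<longleftrightarrow> (\<exists>xs. xs \<noteq> [] \<and> distinct xs \<and> set xs = V \<and>
      E = {{xs ! i, xs ! Suc i} | i. Suc i < length xs})"

definition double_fan :: "'a set \<Rightarrow> 'a set set \<Rightarrow> 'a \<Rightarrow> 'a \<Rightarrow> bool" where
  "double_fan V E v w \<longleftrightarrow> graph V E \<and> v \<noteq> w \<and> dominant V E v \<and> dominant V E w \<and>
     is_path_graph (V - {v, w}) (induced_edges E (V - {v, w}))"

definition walk :: "'b set \<Rightarrow> 'b set set \<Rightarrow> 'b list \<Rightarrow> bool" where
  "walk V E xs \<longleftrightarrow> xs \<noteq> [] \<and> set xs \<subseteq> V \<and> (\<forall>i. Suc i < length xs \<longrightarrow> adj E (xs ! i) (xs ! Suc i))"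

definition connected_graph :: "'b set \<Rightarrow> 'b set set \<Rightarrow> bool" where
  "connected_graph V E \<longleftrightarrow> (\<forall>u\<in>V. \<forall>v\<in>V. \<exists>xs. walk V E xs \<and> hd xs = u \<and> last xs = v)"

definition has_cycle :: "'b set \<Rightarrow> 'b set set \<Rightarrow> bool" where
  "has_cycle V E \<longleftrightarrow> (\<exists>xs. length xs \<ge> 3 \<and> distinct xs \<and> walk V E xs \<and> adj E (last xs) (hd xs))"

definition is_tree :: "'b set \<Rightarrow> 'b set set \<Rightarrow> bool" where
  "is_tree V E \<longleftrightarrow> graph V E \<and> V \<noteq> {} \<and> connected_graph V E \<and> \<not> has_cycle V E"

text \<open>Partitions: the library notion partition_on (nonempty, pairwise disjoint parts covering V).
  Quotient graph G/P: vertices are the parts, distinct parts adjacent iff an edge joins them.\<close>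
definition quotient_edges :: "'a set set \<Rightarrow> 'a set set \<Rightarrow> 'a set set set" where
  "quotient_edges E \<P> = {{P1, P2} | P1 P2. P1 \<in> \<P> \<and> P2 \<in> \<P> \<and> P1 \<noteq> P2 \<and>
      (\<exists>v1\<in>P1. \<exists>v2\<in>P2. {v1, v2} \<in> E)}"

definition iso_subgraph :: "'b set \<Rightarrow> 'b set set \<Rightarrow> 'c set \<Rightarrow> 'c set set \<Rightarrow> bool" where
  "iso_subgraph V E V' E' \<longleftrightarrow> (\<exists>f. inj_on f V \<and> f ` V \<subseteq> V' \<and>
      (\<forall>u\<in>V. \<forall>v\<in>V. {u, v} \<in> E \<longrightarrow> {f u, f v} \<in> E'))"

definition tree_partition :: "'a set \<Rightarrow> 'a set set \<Rightarrow> 'a set set \<Rightarrow> bool" where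
  "tree_partition V E \<P> \<longleftrightarrow> partition_on V \<P> \<and>
     (\<exists>T :: nat set. \<exists>ET. is_tree T ET \<and> iso_subgraph \<P> (quotient_edges E \<P>) T ET)"

definition part_of :: "'a set set \<Rightarrow> 'a \<Rightarrow> 'a set" where
  "part_of \<P> v = (THE X. X \<in> \<P> \<and> v \<in> X)"

definition is_clique :: "'a set set \<Rightarrow> 'a set \<Rightarrow> bool" where
  "is_clique E S \<longleftrightarrow> (\<forall>u\<in>S. \<forall>v\<in>S. u \<noteq> v \<longrightarrow> adj E u v)"

end

theory Submission
  imports Defs
begin

lemma card_Suc_filter:
  "card {i. i < Suc n \<and> P i} = card {i. i < n \<and> P i} + (if P n then 1 else 0)"
proof -
  have fin: "finite {i. i < n \<and> P i}" by simp
  show ?thesis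
  proof (cases "P n")
    case True
    have "{i. i < Suc n \<and> P i} = insert n {i. i < n \<and> P i}" using True by (auto simp: less_Suc_eq)
    then show ?thesis using True fin by simp
  next
    case False
    have "{i. i < Suc n \<and> P i} = {i. i < n \<and> P i}" using False by (auto simp: less_Suc_eq)
    then show ?thesis using False by simp
  qed
qed

lemma runs:
  fixes g :: "nat \<Rightarrow> 'b" and B :: "'b set"
  assumes bound: "\<And>y. card {i. i < N \<and> g i = y} \<le> m"
    and nojump: "\<And>i. Suc i < N \<Longrightarrow> g i \<notin> B \<Longrightarrow> g (Suc i) \<notin> B \<Longrightarrow> g i = g (Suc i)"
  shows "n \<le> N \<Longrightarrow> \<exists>r. n \<le> card {i. i < n \<and> g i \<in> B} * (m+1) + r \<and>
      r \<le> card {i. i < n \<and> g i = g (n-1)} \<and> (r > 0 \<longrightarrow> n > 0 \<and> g (n-1) \<notin> B)"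
proof (induction n)
  case 0
  then show ?case by (intro exI[of _ 0]) simp
next
  case (Suc n)
  then obtain r where r1: "n \<le> card {i. i < n \<and> g i \<in> B} * (m+1) + r"
    and r2: "r \<le> card {i. i < n \<and> g i = g (n-1)}" and r3: "r > 0 \<longrightarrow> n > 0 \<and> g (n-1) \<notin> B"
    by auto
  have bn: "\<And>y. card {i. i < n \<and> g i = y} \<le> m"
  proof -
    fix y
    have "card {i. i < n \<and> g i = y} \<le> card {i. i < N \<and> g i = y}"
      by (rule card_mono) (use Suc.prems in auto)
    then show "card {i. i < n \<and> g i = y} \<le> m" using bound[of y] by linarith
  qed
  have cB: "card {i. i < Suc n \<and> g i \<in> B} = card {i. i < n \<and> g i \<in> B} + (if g n \<in> B then 1 else 0)"
    by (rule card_Suc_filter)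
  have cY: "card {i. i < Suc n \<and> g i = g n} = card {i. i < n \<and> g i = g n} + 1"
    using card_Suc_filter[of n "\<lambda>i. g i = g n"] by simp
  show ?case
  proof (cases "g n \<in> B")
    case True
    have "r \<le> m" using r2 bn[of "g (n-1)"] by linarith
    then show ?thesis using True r1 cB by (intro exI[of _ 0]) (auto simp: algebra_simps)
  next
    case False
    show ?thesis
    proof (cases "r > 0")
      case True
      with r3 have "n > 0" "g (n-1) \<notin> B" by auto
      then have eq: "g (n-1) = g n" using nojump[of "n-1"] Suc.prems False by auto
      show ?thesis using r1 r2 False cB cY eq by (intro exI[of _ "r+1"]) auto
    next
      case False': False
      show ?thesis using r1 False' False cB cY by (intro exI[of _ 1]) auto
    qed
  qed
qed

lemma runs_final:
  fixes g :: "nat \<Rightarrow> 'b" and B :: "'b set"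
  assumes bound: "\<And>y. card {i. i < N \<and> g i = y} \<le> m"
    and nojump: "\<And>i. Suc i < N \<Longrightarrow> g i \<notin> B \<Longrightarrow> g (Suc i) \<notin> B \<Longrightarrow> g i = g (Suc i)"
  shows "N \<le> card {i. i < N \<and> g i \<in> B} * (m+1) + m"
proof -
  obtain r where "N \<le> card {i. i < N \<and> g i \<in> B} * (m+1) + r"
    "r \<le> card {i. i < N \<and> g i = g (N-1)}"
    using runs[OF bound nojump order.refl] by auto
  then show ?thesis using bound[of "g (N-1)"] by linarith
qed


lemma part_of_eq:
  assumes "partition_on V Ps" "Y \<in> Ps" "x \<in> Y"
  shows "part_of Ps x = Y"
  unfolding part_of_def
proof (rule the_equality)
  show "Y \<in> Ps \<and> x \<in> Y" using assms by auto
next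
  fix X assume "X \<in> Ps \<and> x \<in> X"
  then show "X = Y" using assms partition_onD2[OF assms(1)] by (auto dest: disjointD)
qed

lemma part_of_mem:
  assumes "partition_on V Ps" "x \<in> V"
  shows "part_of Ps x \<in> Ps" "x \<in> part_of Ps x"
proof -
  obtain Y where "Y \<in> Ps" "x \<in> Y" using assms partition_onD1[OF assms(1)] by auto
  then show "part_of Ps x \<in> Ps" "x \<in> part_of Ps x" using part_of_eq[OF assms(1)] by auto
qed

lemma part_sub:
  assumes "partition_on V Ps" "Y \<in> Ps" shows "Y \<subseteq> V"
  using partition_onD1[OF assms(1)] assms(2) by auto

lemma arith_fact:
  fixes c k N :: nat
  assumes "c \<ge> 1" "k \<le> 4*c - 2" "N \<le> k * (2*c+1) + 2*c" "N \<ge> 8*c^2+2*c-1"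
  shows False
proof -
  obtain d where d: "c = Suc d" using assms(1) by (cases c) auto
  have "k * (2*c+1) \<le> (4*c-2)*(2*c+1)" using assms(2) by (rule mult_right_mono) simp
  then show False using assms(3,4) unfolding d by (simp add: algebra_simps power2_eq_square)
qed

theorem lemma4p3:
  fixes c :: nat and V :: "'a set" and E :: "'a set set"
    and v1 v2 :: 'a and \<P> \<Q> :: "'a set set"
  assumes fan: "double_fan V E v1 v2"
    and size: "card V \<ge> 8 * c ^ 2 + 2 * c + 1"
    and P: "tree_partition V E \<P>"
    and Q: "partition_on V \<Q>"
    and cap: "\<forall>P\<in>\<P>. \<forall>Q\<in>\<Q>. card (P \<inter> Q) \<le> c"
    and P12: "part_of \<P> v1 \<noteq> part_of \<P> v2"
    and Q12: "part_of \<Q> v1 \<noteq> part_of \<Q> v2"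
  shows "\<exists>v3\<in>V. \<exists>v4\<in>V. card {v1, v2, v3, v4} = 4 \<and> is_clique E {v1, v2, v3, v4} \<and>
           distinct [part_of \<Q> v1, part_of \<Q> v2, part_of \<Q> v3, part_of \<Q> v4]"
proof -
  have gr: "graph V E" and v12: "v1 \<noteq> v2" and d1: "dominant V E v1" and d2: "dominant V E v2"
    and path: "is_path_graph (V - {v1, v2}) (induced_edges E (V - {v1, v2}))"
    using fan unfolding double_fan_def by auto
  have finV: "finite V" using gr unfolding graph_def by auto
  have v1V: "v1 \<in> V" and v2V: "v2 \<in> V" using d1 d2 unfolding dominant_def by auto
  have e12: "{v1, v2} \<in> E" using d1 v2V v12 unfolding dominant_def adj_def by auto
  have e1x: "{v1, x} \<in> E" and e2x: "{v2, x} \<in> E" if "x \<in> V - {v1, v2}" for x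
    using d1 d2 that unfolding dominant_def adj_def by auto
  obtain xs where xs_ne: "xs \<noteq> []" and xs_d: "distinct xs" and xs_set: "set xs = V - {v1, v2}"
    and xs_e: "induced_edges E (V - {v1, v2}) = {{xs ! i, xs ! Suc i} | i. Suc i < length xs}"
    using path unfolding is_path_graph_def by blast
  have Pp: "partition_on V \<P>" using P unfolding tree_partition_def by auto
  obtain T :: "nat set" and ET f where tree: "is_tree T ET" and finj: "inj_on f \<P>"
    and fT: "f ` \<P> \<subseteq> T" and fE: "\<forall>u\<in>\<P>. \<forall>v\<in>\<P>. {u, v} \<in> quotient_edges E \<P> \<longrightarrow> {f u, f v} \<in> ET"
    using P unfolding tree_partition_def iso_subgraph_def by blast
  define P1 where "P1 = part_of \<P> v1"
  define P2 where "P2 = part_of \<P> v2"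
  have P1m: "P1 \<in> \<P>" "v1 \<in> P1" using part_of_mem[OF Pp v1V] P1_def by auto
  have P2m: "P2 \<in> \<P>" "v2 \<in> P2" using part_of_mem[OF Pp v2V] P2_def by auto
  have cover: "x \<in> P1 \<union> P2" if xV: "x \<in> V" for x
  proof (rule ccontr)
    assume nx: "x \<notin> P1 \<union> P2"
    define Px where "Px = part_of \<P> x"
    have Pxm: "Px \<in> \<P>" "x \<in> Px" using part_of_mem[OF Pp xV] Px_def by auto
    have x12: "x \<in> V - {v1, v2}" using nx xV P1m P2m by auto
    have ne1: "Px \<noteq> P1" and ne2: "Px \<noteq> P2" using nx Pxm by auto
    have ne12: "P1 \<noteq> P2" using P12 P1_def P2_def by simp
    have q12: "{P1, P2} \<in> quotient_edges E \<P>"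
      unfolding quotient_edges_def using P1m P2m ne12 e12 by blast
    have q1x: "{P1, Px} \<in> quotient_edges E \<P>"
      unfolding quotient_edges_def using P1m Pxm ne1 e1x[OF x12] by blast
    have q2x: "{P2, Px} \<in> quotient_edges E \<P>"
      unfolding quotient_edges_def using P2m Pxm ne2 e2x[OF x12] by blast
    have a1: "{f P1, f P2} \<in> ET" using fE q12 P1m P2m by blast
    have a2: "{f P2, f Px} \<in> ET" using fE q2x P2m Pxm by blast
    have a3: "{f Px, f P1} \<in> ET" using fE q1x P1m Pxm by (metis insert_commute)
    have dist: "distinct [f P1, f P2, f Px]"
      using finj P1m P2m Pxm ne1 ne2 ne12 by (auto dest: inj_onD)
    have w: "walk T ET [f P1, f P2, f Px]"
      unfolding walk_def adj_def
    proof (intro conjI allI impI)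
      show "set [f P1, f P2, f Px] \<subseteq> T" using fT P1m P2m Pxm by auto
    next
      fix i assume "Suc i < length [f P1, f P2, f Px]"
      then have "i = 0 \<or> i = 1" by auto
      then show "{[f P1, f P2, f Px] ! i, [f P1, f P2, f Px] ! Suc i} \<in> ET"
        using a1 a2 by auto
    qed simp
    have "has_cycle T ET"
      unfolding has_cycle_def
      by (rule exI[of _ "[f P1, f P2, f Px]"]) (use dist w a3 in \<open>auto simp: adj_def\<close>)
    then show False using tree unfolding is_tree_def by auto
  qed
  define Q1 where "Q1 = part_of \<Q> v1"
  define Q2 where "Q2 = part_of \<Q> v2"
  have Q1m: "Q1 \<in> \<Q>" "v1 \<in> Q1" using part_of_mem[OF Q v1V] Q1_def by auto
  have Q2m: "Q2 \<in> \<Q>" "v2 \<in> Q2" using part_of_mem[OF Q v2V] Q2_def by auto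
  have c1: "c \<ge> 1"
  proof -
    have "finite Q1" using finite_subset[OF part_sub[OF Q Q1m(1)] finV] .
    then have "finite (P1 \<inter> Q1)" by simp
    moreover have "v1 \<in> P1 \<inter> Q1" using P1m Q1m by auto
    ultimately have "card (P1 \<inter> Q1) \<ge> 1" by (metis One_nat_def Suc_leI card_gt_0_iff empty_iff)
    then show ?thesis using cap P1m Q1m by force
  qed
  have Ybound: "card Y \<le> 2 * c" if Ym: "Y \<in> \<Q>" for Y
  proof -
    have YV: "Y \<subseteq> V" using part_sub[OF Q Ym] .
    have "Y = (P1 \<inter> Y) \<union> (P2 \<inter> Y)" using YV cover by auto
    then have "card Y \<le> card (P1 \<inter> Y) + card (P2 \<inter> Y)" by (metis card_Un_le)
    moreover have "card (P1 \<inter> Y) \<le> c" "card (P2 \<inter> Y) \<le> c" using cap P1m P2m Ym by auto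
    ultimately show ?thesis by linarith
  qed
  define N where "N = length xs"
  define g where "g i = part_of \<Q> (xs ! i)" for i
  define B where "B = {Q1, Q2}"
  have xsV: "xs ! i \<in> V - {v1, v2}" if "i < N" for i
    using nth_mem[of i xs] that xs_set unfolding N_def by simp
  have injx: "inj_on (nth xs) S" if "S \<subseteq> {..<N}" for S
    using inj_on_nth[OF xs_d] that N_def by auto
  have bound: "card {i. i < N \<and> g i = y} \<le> 2 * c" for y
  proof (cases "\<exists>i<N. g i = y")
    case False
    have e: "{i. i < N \<and> g i = y} = {}" using False by auto
    show ?thesis unfolding e by simp
  next
    case True
    then obtain i0 where i0: "i0 < N" "g i0 = y" by auto
    have "xs ! i0 \<in> V" using xsV[OF i0(1)] by simp
    then have ym: "y \<in> \<Q>" using part_of_mem(1)[OF Q] i0(2) unfolding g_def by blast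
    have sub: "{i. i < N \<and> g i = y} \<subseteq> {..<N}" by auto
    have "card {i. i < N \<and> g i = y} = card (nth xs ` {i. i < N \<and> g i = y})"
      by (rule card_image[symmetric]) (rule injx[OF sub])
    also have "\<dots> \<le> card y"
    proof (rule card_mono)
      show "finite y" using finite_subset[OF part_sub[OF Q ym] finV] .
      show "nth xs ` {i. i < N \<and> g i = y} \<subseteq> y"
      proof
        fix x assume "x \<in> nth xs ` {i. i < N \<and> g i = y}"
        then obtain j where j: "j < N" "g j = y" "x = xs ! j" by auto
        have "xs ! j \<in> V" using xsV[OF j(1)] by simp
        then have "xs ! j \<in> part_of \<Q> (xs ! j)" using part_of_mem(2)[OF Q] by blast
        then show "x \<in> y" using j unfolding g_def by simp
      qed
    qed
    finally show ?thesis using Ybound[OF ym] by linarith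
  qed
  have Bbound: "card {i. i < N \<and> g i \<in> B} \<le> 4 * c - 2"
  proof -
    have "card {i. i < N \<and> g i \<in> B} = card (nth xs ` {i. i < N \<and> g i \<in> B})"
      by (rule card_image[symmetric]) (rule injx, auto)
    also have "\<dots> \<le> card ((Q1 - {v1}) \<union> (Q2 - {v2}))"
    proof (rule card_mono)
      show "finite ((Q1 - {v1}) \<union> (Q2 - {v2}))"
        using finite_subset[OF part_sub[OF Q Q1m(1)] finV] finite_subset[OF part_sub[OF Q Q2m(1)] finV] by simp
      show "nth xs ` {i. i < N \<and> g i \<in> B} \<subseteq> (Q1 - {v1}) \<union> (Q2 - {v2})"
      proof
        fix x assume "x \<in> nth xs ` {i. i < N \<and> g i \<in> B}"
        then obtain j where j: "j < N" "g j \<in> B" "x = xs ! j" by auto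
        have xV: "x \<in> V - {v1, v2}" using xsV j by simp
        have "x \<in> part_of \<Q> x" using part_of_mem(2)[OF Q] xV by simp
        moreover have "part_of \<Q> x = Q1 \<or> part_of \<Q> x = Q2" using j unfolding g_def B_def by simp
        ultimately show "x \<in> (Q1 - {v1}) \<union> (Q2 - {v2})" using xV by auto
      qed
    qed
    also have "\<dots> \<le> card (Q1 - {v1}) + card (Q2 - {v2})" by (rule card_Un_le)
    also have "\<dots> = (card Q1 - 1) + (card Q2 - 1)"
    proof -
      have "finite Q1" "finite Q2"
        using finite_subset[OF part_sub[OF Q Q1m(1)] finV] finite_subset[OF part_sub[OF Q Q2m(1)] finV] by simp_all
      then show ?thesis using Q1m Q2m by (simp add: card_Diff_singleton)
    qed
    finally show ?thesis using Ybound[OF Q1m(1)] Ybound[OF Q2m(1)] by linarith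
  qed
  have NV: "N = card V - 2"
  proof -
    have a: "N = card (set xs)" using distinct_card[OF xs_d] N_def by simp
    have b: "card (V - {v1, v2}) = card V - card {v1, v2}"
      by (rule card_Diff_subset) (use v1V v2V in auto)
    have c: "card {v1, v2} = 2" using v12 by simp
    show ?thesis using a b c xs_set by simp
  qed
  have "\<exists>i. Suc i < N \<and> g i \<notin> B \<and> g (Suc i) \<notin> B \<and> g i \<noteq> g (Suc i)"
  proof (rule ccontr)
    assume "\<not> ?thesis"
    then have nj: "\<And>i. Suc i < N \<Longrightarrow> g i \<notin> B \<Longrightarrow> g (Suc i) \<notin> B \<Longrightarrow> g i = g (Suc i)" by blast
    have "N \<le> card {i. i < N \<and> g i \<in> B} * (2*c+1) + 2*c"
      using runs_final[of N g "2*c" B, OF bound nj] by simp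
    moreover have "N \<ge> 8*c^2+2*c-1" using NV size by linarith
    ultimately show False using arith_fact[OF c1 Bbound] by blast
  qed
  then obtain i where i: "Suc i < N" "g i \<notin> B" "g (Suc i) \<notin> B" "g i \<noteq> g (Suc i)" by blast
  define v3 where "v3 = xs ! i"
  define v4 where "v4 = xs ! Suc i"
  have v3V: "v3 \<in> V - {v1, v2}" and v4V: "v4 \<in> V - {v1, v2}" using xsV i(1) v3_def v4_def by auto
  have v34: "v3 \<noteq> v4" using xs_d i(1) N_def v3_def v4_def by (simp add: nth_eq_iff_index_eq)
  have e34: "{v3, v4} \<in> E"
  proof -
    have "{v3, v4} \<in> induced_edges E (V - {v1, v2})" unfolding xs_e
      using i(1) unfolding N_def v3_def v4_def by blast
    then show ?thesis unfolding induced_edges_def by auto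
  qed
  have n1: "v1 \<notin> {v2, v3, v4}" and n2: "v2 \<notin> {v3, v4}" and n3: "v3 \<notin> {v4}"
    using v3V v4V v34 v12 by auto
  have card4: "card {v1, v2, v3, v4} = 4" using n1 n2 n3 by simp
  have cl: "is_clique E {v1, v2, v3, v4}"
    unfolding is_clique_def adj_def
    using e12 e34 e1x[OF v3V] e1x[OF v4V] e2x[OF v3V] e2x[OF v4V]
      insert_commute[of v2 v1 "{}"] insert_commute[of v4 v3 "{}"]
      insert_commute[of v3 v1 "{}"] insert_commute[of v4 v1 "{}"]
      insert_commute[of v3 v2 "{}"] insert_commute[of v4 v2 "{}"]
    by auto
  have ds: "distinct [part_of \<Q> v1, part_of \<Q> v2, part_of \<Q> v3, part_of \<Q> v4]"
  proof -
    have "g i \<noteq> Q1" "g i \<noteq> Q2" "g (Suc i) \<noteq> Q1" "g (Suc i) \<noteq> Q2" using i(2,3) B_def by auto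
    moreover have "Q1 \<noteq> Q2" using Q12 Q1_def Q2_def by simp
    ultimately have "distinct [Q1, Q2, g i, g (Suc i)]" using i(4) by auto
    moreover have "part_of \<Q> v3 = g i" "part_of \<Q> v4 = g (Suc i)"
      unfolding g_def v3_def v4_def by (rule refl)+
    ultimately show ?thesis unfolding Q1_def Q2_def by simp
  qed
  show ?thesis using v3V v4V card4 cl ds by blast
qed

end
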